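(* Let $(G,\cdot)$ be a WIPL with identity $e$, let $(H,\circ)$ be a WIPL with identity $e'$, and let $(A,B,C)$ be an isotopism from $(G,\cdot)$ to $(H,\circ)$. Put $a=e'A^{-1}$ and $b=e'B^{-1}$. Assume that either $(x\cdot y)^\rho=x^\rho\cdot y^\lambda$ for all $x,y\in G$, or $(x\cdot y)^\lambda=x^\lambda\cdot y^\rho$ for all $x,y\in G$. Then $C$ is an isomorphism from $(G,\cdot)$ onto $(H,\circ)$ if and only if $(L_b,R_a,I)\in AUT(G,\cdot)$. Moreover, in that case $(G,\cdot)$ and $(H,\circ)$ are (isomorphic) cross inverse property loops, $R_aL_b=I$ and $b\cdot a=e$.
   Context: Maps are written on the right of their arguments ($xU$) and composed left to right: $UV$ means first apply $U$, then $V$; $I$ is the identity map. For a loop $(L,\cdot)$ with identity $e$, $x^\rho$ and $x^\lambda$ denote the right and left inverses of $x$ ($x x^\rho=e=x^\lambda x$), and $J_\rho:x\mapsto x^\rho$, $J_\lambda:x\mapsto x^\lambda$, $L_x:y\mapsto xy$, $R_x:y\mapsto yx$. $L$ is a weak inverse property loop (WIPL) if $xy\cdot z=e$ implies $x\cdot yz=e$ for all $x,y,z\in L$; it is a cross inverse property loop (CIPL) if $xy\cdot x^\rho=y$ for all $x,y\in L$. A triple $(U,V,W)$ of bijections $G\to H$ between loops $(G,\cdot)$ and $(H,\circ)$ is an isotopism if $xU\circ yV=(x\cdot y)W$ for all $x,y\in G$; an autotopism is an isotopism of a loop to itself, and $AUT(G,\cdot)$ denotes the group of autotopisms under componentwise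 composition. *)

theory Defs
  imports Main
begin

text \<open>A loop is given by a carrier set, a binary operation and an identity element.
Maps are represented as ordinary functions: the paper's xU is U x.\<close>

definition loop :: "'a set \<Rightarrow> ('a \<Rightarrow> 'a \<Rightarrow> 'a) \<Rightarrow> 'a \<Rightarrow> bool" where
  "loop G m e \<longleftrightarrow> e \<in> G \<and> (\<forall>x\<in>G. \<forall>y\<in>G. m x y \<in> G)
     \<and> (\<forall>x\<in>G. m e x = x \<and> m x e = x)
     \<and> (\<forall>a\<in>G. \<forall>b\<in>G. (\<exists>!x. x \<in> G \<and> m a x = b) \<and> (\<exists>!y. y \<in> G \<and> m y a = b))"

definition rinv :: "'a set \<Rightarrow> ('a \<Rightarrow> 'a \<Rightarrow> 'a) \<Rightarrow> 'a \<Rightarrow> 'a \<Rightarrow> 'a" where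
  "rinv G m e x = (THE y. y \<in> G \<and> m x y = e)"

definition linv :: "'a set \<Rightarrow> ('a \<Rightarrow> 'a \<Rightarrow> 'a) \<Rightarrow> 'a \<Rightarrow> 'a \<Rightarrow> 'a" where
  "linv G m e x = (THE y. y \<in> G \<and> m y x = e)"

definition wipl :: "'a set \<Rightarrow> ('a \<Rightarrow> 'a \<Rightarrow> 'a) \<Rightarrow> 'a \<Rightarrow> bool" where
  "wipl G m e \<longleftrightarrow> loop G m e \<and>
     (\<forall>x\<in>G. \<forall>y\<in>G. \<forall>z\<in>G. m (m x y) z = e \<longrightarrow> m x (m y z) = e)"

definition cipl :: "'a set \<Rightarrow> ('a \<Rightarrow> 'a \<Rightarrow> 'a) \<Rightarrow> 'a \<Rightarrow> bool" where
  "cipl G m e \<longleftrightarrow> loop G m e \<and>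
     (\<forall>x\<in>G. \<forall>y\<in>G. m (m x y) (rinv G m e x) = y)"

definition isotopism :: "'a set \<Rightarrow> ('a \<Rightarrow> 'a \<Rightarrow> 'a) \<Rightarrow> 'b set \<Rightarrow> ('b \<Rightarrow> 'b \<Rightarrow> 'b)
    \<Rightarrow> ('a \<Rightarrow> 'b) \<Rightarrow> ('a \<Rightarrow> 'b) \<Rightarrow> ('a \<Rightarrow> 'b) \<Rightarrow> bool" where
  "isotopism G m H n U V W \<longleftrightarrow> bij_betw U G H \<and> bij_betw V G H \<and> bij_betw W G H
     \<and> (\<forall>x\<in>G. \<forall>y\<in>G. n (U x) (V y) = W (m x y))"

definition autotopism :: "'a set \<Rightarrow> ('a \<Rightarrow> 'a \<Rightarrow> 'a)
    \<Rightarrow> ('a \<Rightarrow> 'a) \<Rightarrow> ('a \<Rightarrow> 'a) \<Rightarrow> ('a \<Rightarrow> 'a) \<Rightarrow> bool" where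
  "autotopism G m U V W \<longleftrightarrow> isotopism G m G m U V W"

definition loop_isomorphism :: "'a set \<Rightarrow> ('a \<Rightarrow> 'a \<Rightarrow> 'a) \<Rightarrow> 'b set \<Rightarrow> ('b \<Rightarrow> 'b \<Rightarrow> 'b)
    \<Rightarrow> ('a \<Rightarrow> 'b) \<Rightarrow> bool" where
  "loop_isomorphism G m H n f \<longleftrightarrow> bij_betw f G H \<and> (\<forall>x\<in>G. \<forall>y\<in>G. f (m x y) = n (f x) (f y))"

end

theory Submission
  imports Defs
begin

lemma ballE1: "\<forall>a\<in>G. \<forall>b\<in>G. P a b \<and> Q a b \<Longrightarrow> a \<in> G \<Longrightarrow> b \<in> G \<Longrightarrow> P a b"
  by blast
lemma ballE2: "\<forall>a\<in>G. \<forall>b\<in>G. P a b \<and> Q a b \<Longrightarrow> a \<in> G \<Longrightarrow> b \<in> G \<Longrightarrow> Q a b"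
  by blast

locale lp =
  fixes G :: "'a set" and m :: "'a \<Rightarrow> 'a \<Rightarrow> 'a" and e :: 'a
  assumes L: "loop G m e"
begin

lemma LL: "e \<in> G \<and> (\<forall>x\<in>G. \<forall>y\<in>G. m x y \<in> G)
     \<and> (\<forall>x\<in>G. m e x = x \<and> m x e = x)
     \<and> (\<forall>a\<in>G. \<forall>b\<in>G. (\<exists>!x. x \<in> G \<and> m a x = b) \<and> (\<exists>!y. y \<in> G \<and> m y a = b))"
  using L unfolding loop_def .

lemma e_in[simp]: "e \<in> G" using LL by (rule conjunct1)
lemma cl[simp]: "x \<in> G \<Longrightarrow> y \<in> G \<Longrightarrow> m x y \<in> G" using conjunct1[OF conjunct2[OF LL]] by blast
lemma lid[simp]: "x \<in> G \<Longrightarrow> m e x = x" using conjunct1[OF conjunct2[OF conjunct2[OF LL]]] by blast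
lemma rid[simp]: "x \<in> G \<Longrightarrow> m x e = x" using conjunct1[OF conjunct2[OF conjunct2[OF LL]]] by blast
lemma luniq: "a \<in> G \<Longrightarrow> b \<in> G \<Longrightarrow> \<exists>!x. x \<in> G \<and> m a x = b"
  using conjunct2[OF conjunct2[OF conjunct2[OF LL]]] by (rule ballE1)
lemma runiq: "a \<in> G \<Longrightarrow> b \<in> G \<Longrightarrow> \<exists>!y. y \<in> G \<and> m y a = b"
  using conjunct2[OF conjunct2[OF conjunct2[OF LL]]] by (rule ballE2)

lemma lcanc: "a \<in> G \<Longrightarrow> x \<in> G \<Longrightarrow> y \<in> G \<Longrightarrow> m a x = m a y \<Longrightarrow> x = y"
proof -
  assume h: "a \<in> G" "x \<in> G" "y \<in> G" "m a x = m a y"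
  have "\<exists>!z. z \<in> G \<and> m a z = m a x" using luniq h by simp
  then obtain z where z: "\<forall>w. w \<in> G \<and> m a w = m a x \<longrightarrow> w = z" by (elim ex1E) blast
  have "x = z" by (rule mp[OF spec[OF z, of x]]) (use h in simp)
  moreover have "y = z" by (rule mp[OF spec[OF z, of y]]) (use h in simp)
  ultimately show "x = y" by simp
qed
lemma rcanc: "a \<in> G \<Longrightarrow> x \<in> G \<Longrightarrow> y \<in> G \<Longrightarrow> m x a = m y a \<Longrightarrow> x = y"
proof -
  assume h: "a \<in> G" "x \<in> G" "y \<in> G" "m x a = m y a"
  have "\<exists>!z. z \<in> G \<and> m z a = m x a" using runiq h by simp
  then obtain z where z: "\<forall>w. w \<in> G \<and> m w a = m x a \<longrightarrow> w = z" by (elim ex1E) blast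
  have "x = z" by (rule mp[OF spec[OF z, of x]]) (use h in simp)
  moreover have "y = z" by (rule mp[OF spec[OF z, of y]]) (use h in simp)
  ultimately show "x = y" by simp
qed
lemma lsol: "a \<in> G \<Longrightarrow> b \<in> G \<Longrightarrow> \<exists>x\<in>G. m a x = b"
  by (drule (1) luniq, elim ex1E) blast
lemma rsol: "a \<in> G \<Longrightarrow> b \<in> G \<Longrightarrow> \<exists>y\<in>G. m y a = b"
  by (drule (1) runiq, elim ex1E) blast

lemma rinv: assumes "x \<in> G" shows "rinv G m e x \<in> G \<and> m x (rinv G m e x) = e"
  unfolding rinv_def by (rule theI'[OF luniq[OF assms e_in]])
lemma linv: assumes "x \<in> G" shows "linv G m e x \<in> G \<and> m (linv G m e x) x = e"
  unfolding linv_def by (rule theI'[OF runiq[OF assms e_in]])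
lemma rinv_u: "x \<in> G \<Longrightarrow> y \<in> G \<Longrightarrow> m x y = e \<Longrightarrow> rinv G m e x = y"
proof -
  assume h: "x \<in> G" "y \<in> G" "m x y = e"
  have r: "rinv G m e x \<in> G" "m x (rinv G m e x) = e" using rinv[OF h(1)] by auto
  have "m x (rinv G m e x) = m x y" using r(2) h(3) by (rule trans[OF _ sym])
  from lcanc[OF h(1) r(1) h(2) this] show ?thesis .
qed
lemma linv_u: "x \<in> G \<Longrightarrow> y \<in> G \<Longrightarrow> m y x = e \<Longrightarrow> linv G m e x = y"
proof -
  assume h: "x \<in> G" "y \<in> G" "m y x = e"
  have r: "linv G m e x \<in> G" "m (linv G m e x) x = e" using linv[OF h(1)] by auto
  have "m (linv G m e x) x = m y x" using r(2) h(3) by (rule trans[OF _ sym])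
  from rcanc[OF h(1) r(1) h(2) this] show ?thesis .
qed

end

locale wc = lp +
  assumes W: "\<forall>x\<in>G. \<forall>y\<in>G. \<forall>z\<in>G. m (m x y) z = e \<longrightarrow> m x (m y z) = e"
  and cond: "(\<forall>x\<in>G. \<forall>y\<in>G. rinv G m e (m x y) = m (rinv G m e x) (linv G m e y))
             \<or> (\<forall>x\<in>G. \<forall>y\<in>G. linv G m e (m x y) = m (linv G m e x) (rinv G m e y))"
begin

abbreviation J where "J x \<equiv> rinv G m e x"

lemma Jin[simp]: "x \<in> G \<Longrightarrow> J x \<in> G" using rinv by blast
lemma Jr[simp]: "x \<in> G \<Longrightarrow> m x (J x) = e" using rinv by blast

lemma Je[simp]: "J e = e" using rinv_u[of e e] by simp

lemma rl: "x \<in> G \<Longrightarrow> linv G m e x = J x"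
proof -
  assume x: "x \<in> G"
  have li: "linv G m e x \<in> G" "m (linv G m e x) x = e" using linv[OF x] by auto
  have Jli: "J (linv G m e x) = x" using rinv_u[of "linv G m e x" x] li x by simp
  from cond show ?thesis
  proof
    assume c: "\<forall>x\<in>G. \<forall>y\<in>G. rinv G m e (m x y) = m (rinv G m e x) (linv G m e y)"
    have "J (m (linv G m e x) x) = m (J (linv G m e x)) (linv G m e x)"
      using c li x by blast
    hence "m x (linv G m e x) = e" using li Jli by simp
    then show ?thesis using rinv_u[of x "linv G m e x"] li x by simp
  next
    assume c: "\<forall>x\<in>G. \<forall>y\<in>G. linv G m e (m x y) = m (linv G m e x) (rinv G m e y)"
    have le: "linv G m e e = e" using linv_u[of e e] by simp
    have "linv G m e (m x (J x)) = m (linv G m e x) (J (J x))"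
      using c x Jin[OF x] by blast
    hence "m (linv G m e x) (J (J x)) = e" using le x by simp
    hence "J (linv G m e x) = J (J x)" using rinv_u[of "linv G m e x" "J (J x)"] li x Jin[OF x] Jin[OF Jin[OF x]] by simp
    hence "J (J x) = x" using Jli by simp
    hence "m (J x) x = e" using Jr[OF Jin[OF x]] by simp
    then show ?thesis using linv_u[of x "J x"] x Jin[OF x] by simp
  qed
qed

lemma Jl[simp]: "x \<in> G \<Longrightarrow> m (J x) x = e" using linv[of x] rl[of x] by simp
lemma JJ[simp]: "x \<in> G \<Longrightarrow> J (J x) = x" using rinv_u Jl Jin by blast
lemma aut: "x \<in> G \<Longrightarrow> y \<in> G \<Longrightarrow> J (m x y) = m (J x) (J y)"
  using cond rl by auto

lemma wip: "x \<in> G \<Longrightarrow> y \<in> G \<Longrightarrow> m y (J (m x y)) = J x"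
proof -
  assume a: "x \<in> G" "y \<in> G"
  have "m x (m y (J (m x y))) = e" using W a by simp
  from rinv_u[OF a(1) _ this] have "J x = m y (J (m x y))" using a by simp
  thus ?thesis by simp
qed

lemma C2: "u \<in> G \<Longrightarrow> w \<in> G \<Longrightarrow> m (J w) (m u w) = u"
proof -
  assume a: "u \<in> G" "w \<in> G"
  have "m (J w) (J (m (J u) (J w))) = J (J u)" using wip[of "J u" "J w"] a by simp
  thus ?thesis using a aut by simp
qed

lemma C1: "x \<in> G \<Longrightarrow> v \<in> G \<Longrightarrow> m (m x v) (J x) = v"
proof -
  assume a: "x \<in> G" "v \<in> G"
  have h: "\<And>w. w \<in> G \<Longrightarrow> m x (m w (J x)) = w" using C2[of _ "J x"] a by simp
  have "m x (m (m x v) (J x)) = m x v" using h a by simp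
  thus ?thesis using lcanc[of x "m (m x v) (J x)" v] a by simp
qed

lemma PQ:
  assumes a: "a \<in> G" and b: "b \<in> G"
  shows "(\<forall>x\<in>G. \<forall>y\<in>G. m (m x b) (m a y) = m x y) \<longleftrightarrow>
         (\<forall>x\<in>G. \<forall>y\<in>G. m (m b x) (m y a) = m x y)"
proof
  assume P: "\<forall>x\<in>G. \<forall>y\<in>G. m (m x b) (m a y) = m x y"
  have "m b a = e" using P[rule_format, of e e] a b by simp
  hence bJ: "b = J a" using linv_u[of a b] rl[of a] a b by simp
  have r1: "\<And>x. x \<in> G \<Longrightarrow> m (m x b) a = x"
  proof -
    fix x assume x: "x \<in> G"
    show "m (m x b) a = x" using P[rule_format, OF x e_in] a b x by simp
  qed
  have r2: "\<And>v. v \<in> G \<Longrightarrow> m (m v a) b = v"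
  proof -
    fix v assume v: "v \<in> G"
    have "m (m (m v a) b) a = m v a" using r1 v a by simp
    thus "m (m v a) b = v" using rcanc[of a "m (m v a) b" v] a b v by simp
  qed
  have com: "\<And>v. v \<in> G \<Longrightarrow> m a v = m v a"
  proof -
    fix v assume v: "v \<in> G"
    have "m (m a v) b = v" using C1 a v bJ by simp
    also have "v = m (m v a) b" using r2 v by simp
    finally show "m a v = m v a" using rcanc[of b "m a v" "m v a"] a b v by simp
  qed
  show "\<forall>x\<in>G. \<forall>y\<in>G. m (m b x) (m y a) = m x y"
  proof (intro ballI)
    fix x y assume xy: "x \<in> G" "y \<in> G"
    have "m x b = J (m (J x) a)" using aut[of "J x" a] xy a bJ by simp
    also have "m (J x) a = m a (J x)" using com[of "J x"] xy by simp
    also have "J (m a (J x)) = m b x" using aut[of a "J x"] a xy bJ by simp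
    finally have "m b x = m x b" by simp
    thus "m (m b x) (m y a) = m x y" using P xy com by simp
  qed
next
  assume Q: "\<forall>x\<in>G. \<forall>y\<in>G. m (m b x) (m y a) = m x y"
  have "m b a = e" using Q[rule_format, of e e] a b by simp
  hence bJ: "b = J a" using linv_u[of a b] rl[of a] a b by simp
  have com: "\<And>y. y \<in> G \<Longrightarrow> m y a = m a y"
    using Q[rule_format, of a] a bJ by simp
  have com': "\<And>y. y \<in> G \<Longrightarrow> m y b = m b y"
  proof -
    fix y assume y: "y \<in> G"
    have "m (J y) a = m a (J y)" using com y by simp
    hence "J (m (J y) a) = J (m a (J y))" by simp
    thus "m y b = m b y" using aut y a bJ by simp
  qed
  have nuc: "\<And>u y. u \<in> G \<Longrightarrow> y \<in> G \<Longrightarrow> m u (m y a) = m (m u a) y"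
  proof -
    fix u y assume uy: "u \<in> G" "y \<in> G"
    have "m b (m u a) = u" using C2 uy a bJ by simp
    thus "m u (m y a) = m (m u a) y" using Q[rule_format, of "m u a" y] uy a by simp
  qed
  show "\<forall>x\<in>G. \<forall>y\<in>G. m (m x b) (m a y) = m x y"
  proof (intro ballI)
    fix x y assume xy: "x \<in> G" "y \<in> G"
    have "m (m x b) (m a y) = m (m x b) (m y a)" using com xy by simp
    also have "\<dots> = m (m (m x b) a) y" using nuc xy a b by simp
    also have "m (m x b) a = m (m b x) a" using com' xy by simp
    also have "\<dots> = x" using C1[of "J a" x] xy a bJ by simp
    finally show "m (m x b) (m a y) = m x y" .
  qed
qed

end

lemma (in lp) bijL: "b \<in> G \<Longrightarrow> bij_betw (m b) G G"
proof (rule bij_betw_imageI)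
  assume b: "b \<in> G"
  show "inj_on (m b) G"
  proof (rule inj_onI)
    fix x y assume "x \<in> G" "y \<in> G" "m b x = m b y"
    thus "x = y" by (rule lcanc[OF b])
  qed
  show "m b ` G = G"
  proof
    show "m b ` G \<subseteq> G"
    proof
      fix y assume "y \<in> m b ` G"
      then obtain x where "x \<in> G" "y = m b x" by blast
      thus "y \<in> G" using b by simp
    qed
    show "G \<subseteq> m b ` G"
    proof
      fix y assume "y \<in> G"
      then obtain x where "x \<in> G" "m b x = y" using lsol b by blast
      thus "y \<in> m b ` G" by blast
    qed
  qed
qed
lemma (in lp) bijR: "a \<in> G \<Longrightarrow> bij_betw (\<lambda>x. m x a) G G"
proof (rule bij_betw_imageI)
  assume a: "a \<in> G"
  show "inj_on (\<lambda>x. m x a) G"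
  proof (rule inj_onI)
    fix x y assume "x \<in> G" "y \<in> G" "m x a = m y a"
    thus "x = y" by (rule rcanc[OF a])
  qed
  show "(\<lambda>x. m x a) ` G = G"
  proof
    show "(\<lambda>x. m x a) ` G \<subseteq> G"
    proof
      fix y assume "y \<in> (\<lambda>x. m x a) ` G"
      then obtain x where "x \<in> G" "y = m x a" by blast
      thus "y \<in> G" using a by simp
    qed
    show "G \<subseteq> (\<lambda>x. m x a) ` G"
    proof
      fix y assume "y \<in> G"
      then obtain x where "x \<in> G" "m x a = y" using rsol a by blast
      thus "y \<in> (\<lambda>x. m x a) ` G" by blast
    qed
  qed
qed

theorem mainTheorem4:
  fixes G :: "'a set" and m :: "'a \<Rightarrow> 'a \<Rightarrow> 'a" and e :: 'a
    and H :: "'b set" and n :: "'b \<Rightarrow> 'b \<Rightarrow> 'b" and e' :: 'b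
    and A B C :: "'a \<Rightarrow> 'b"
  assumes wG: "wipl G m e"
    and wH: "wipl H n e'"
    and iso: "isotopism G m H n A B C"
    and cond: "(\<forall>x\<in>G. \<forall>y\<in>G. rinv G m e (m x y) = m (rinv G m e x) (linv G m e y))
             \<or> (\<forall>x\<in>G. \<forall>y\<in>G. linv G m e (m x y) = m (linv G m e x) (rinv G m e y))"
  defines "a \<equiv> inv_into G A e'" and "b \<equiv> inv_into G B e'"
  shows "(loop_isomorphism G m H n C \<longleftrightarrow> autotopism G m (\<lambda>x. m b x) (\<lambda>x. m x a) id)
    \<and> (loop_isomorphism G m H n C \<longrightarrow>
         cipl G m e \<and> cipl H n e' \<and> (\<forall>x\<in>G. m b (m x a) = x) \<and> m b a = e)"
proof -
  have wG1: "loop G m e" and wG2: "\<forall>x\<in>G. \<forall>y\<in>G. \<forall>z\<in>G. m (m x y) z = e \<longrightarrow> m x (m y z) = e"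
    using wG unfolding wipl_def by blast+
  have wH1: "loop H n e'" using wH unfolding wipl_def by blast
  interpret wc G m e by (rule wc.intro[OF lp.intro[OF wG1] wc_axioms.intro[OF wG2 cond]])
  interpret H: lp H n e' by (rule lp.intro[OF wH1])
  have bA: "bij_betw A G H" and bB: "bij_betw B G H" and bC: "bij_betw C G H"
    and hom: "\<And>x y. x \<in> G \<Longrightarrow> y \<in> G \<Longrightarrow> n (A x) (B y) = C (m x y)"
    using iso unfolding isotopism_def by blast+
  have eA: "e' \<in> A ` G" using bA H.e_in by (simp add: bij_betw_def)
  have eB: "e' \<in> B ` G" using bB H.e_in by (simp add: bij_betw_def)
  have aG: "a \<in> G" and Aa: "A a = e'" unfolding a_def
    using inv_into_into[OF eA] f_inv_into_f[OF eA] by auto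
  have bG: "b \<in> G" and Bb: "B b = e'" unfolding b_def
    using inv_into_into[OF eB] f_inv_into_f[OF eB] by auto
  have AG: "\<And>x. x \<in> G \<Longrightarrow> A x \<in> H" using bA bij_betwE by blast
  have BG: "\<And>x. x \<in> G \<Longrightarrow> B x \<in> H" using bB bij_betwE by blast
  have CG: "\<And>x. x \<in> G \<Longrightarrow> C x \<in> H" using bC bij_betwE by blast
  have AC: "\<And>x. x \<in> G \<Longrightarrow> A x = C (m x b)"
  proof -
    fix x assume x: "x \<in> G"
    have "n (A x) (B b) = C (m x b)" using hom x bG by simp
    thus "A x = C (m x b)" using Bb H.rid[OF AG[OF x]] by simp
  qed
  have BC: "\<And>y. y \<in> G \<Longrightarrow> B y = C (m a y)"
  proof -
    fix x assume x: "x \<in> G"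
    have "n (A a) (B x) = C (m a x)" using hom x aG by simp
    thus "B x = C (m a x)" using Aa H.lid[OF BG[OF x]] by simp
  qed
  have injC: "inj_on C G" using bC by (simp add: bij_betw_def)
  have isoP: "loop_isomorphism G m H n C \<longleftrightarrow>
      (\<forall>x\<in>G. \<forall>y\<in>G. m (m x b) (m a y) = m x y)"
  proof
    assume "loop_isomorphism G m H n C"
    hence h: "\<And>x y. x \<in> G \<Longrightarrow> y \<in> G \<Longrightarrow> C (m x y) = n (C x) (C y)"
      unfolding loop_isomorphism_def by auto
    show "\<forall>x\<in>G. \<forall>y\<in>G. m (m x b) (m a y) = m x y"
    proof (intro ballI)
      fix x y assume xy: "x \<in> G" "y \<in> G"
      have "C (m (m x b) (m a y)) = C (m x y)"
        using h[of "m x b" "m a y"] hom[of x y] AC BC xy aG bG by simp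
      thus "m (m x b) (m a y) = m x y" using injC xy aG bG by (simp add: inj_on_def)
    qed
  next
    assume P: "\<forall>x\<in>G. \<forall>y\<in>G. m (m x b) (m a y) = m x y"
    show "loop_isomorphism G m H n C" unfolding loop_isomorphism_def
    proof (intro conjI bC ballI)
      fix u v assume uv: "u \<in> G" "v \<in> G"
      obtain x where x: "x \<in> G" "m x b = u" using rsol bG uv by blast
      obtain y where y: "y \<in> G" "m a y = v" using lsol aG uv by blast
      have "n (C u) (C v) = n (A x) (B y)" using AC BC x y by simp
      also have "\<dots> = C (m x y)" using hom x y by simp
      also have "\<dots> = C (m u v)" using P[rule_format, OF x(1) y(1)] x y by simp
      finally show "C (m u v) = n (C u) (C v)" by simp
    qed
  qed
  have autQ: "autotopism G m (\<lambda>x. m b x) (\<lambda>x. m x a) id \<longleftrightarrow>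
      (\<forall>x\<in>G. \<forall>y\<in>G. m (m b x) (m y a) = m x y)"
    unfolding autotopism_def isotopism_def id_apply using bijL[OF bG] bijR[OF aG] bij_betw_id[of G, unfolded id_def] by simp
  have main: "loop_isomorphism G m H n C \<longleftrightarrow> autotopism G m (\<lambda>x. m b x) (\<lambda>x. m x a) id"
    using isoP autQ PQ[OF aG bG] by simp
  show ?thesis
  proof (intro conjI impI main)
    assume ic: "loop_isomorphism G m H n C"
    hence h: "\<And>x y. x \<in> G \<Longrightarrow> y \<in> G \<Longrightarrow> C (m x y) = n (C x) (C y)"
      unfolding loop_isomorphism_def by auto
    have Q: "\<forall>x\<in>G. \<forall>y\<in>G. m (m b x) (m y a) = m x y" using ic main autQ by simp
    show "cipl G m e" unfolding cipl_def using L C1 by blast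
    have Ce: "C e = e'"
    proof -
      have "n (C e) (C e) = n (C e) e'" using h[of e e] CG by simp
      thus ?thesis using H.lcanc[of "C e" "C e" e'] CG[of e] by simp
    qed
    show "cipl H n e'" unfolding cipl_def
    proof (intro conjI ballI)
      show "loop H n e'" by (rule H.L)
      fix X Y assume XY: "X \<in> H" "Y \<in> H"
      obtain x where x: "x \<in> G" "X = C x" using XY bC unfolding bij_betw_def by blast
      obtain y where y: "y \<in> G" "Y = C y" using XY bC unfolding bij_betw_def by blast
      have "rinv H n e' X = C (J x)"
        using H.rinv_u[of X "C (J x)"] x h[of x "J x"] Ce CG by simp
      moreover have "n (n (C x) (C y)) (C (J x)) = C (m (m x y) (J x))"
        using h[of x y] h[of "m x y" "J x"] x y by simp
      ultimately show "n (n X Y) (rinv H n e' X) = Y" using x y C1[of x y] by simp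
    qed
    show "\<forall>x\<in>G. m b (m x a) = x"
    proof
      fix x assume x: "x \<in> G"
      show "m b (m x a) = x" using Q[rule_format, OF e_in x] bG x by simp
    qed
    show "m b a = e" using Q[rule_format, of e e] bG aG by simp
  qed
qed

end
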